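(* For every integer $n\ge3$, the number of cusps of $\Gamma_n$ equals $$\frac{n^2}{2}\prod_{p\mid n,\ p\text{ prime}}\left(1-p^{-2}\right).$$
   Context: $\Gamma_n=\left\{\begin{pmatrix}a&b\\c&d\end{pmatrix}\in\mathrm{SL}_2(\mathbb Z):n^2\mid c,\ a\equiv d\equiv\pm1\pmod n\right\}$. The cusps of $\Gamma_n$ are the orbits of $\Gamma_n$ acting by Möbius transformations on $\mathbb Q\cup\{\infty\}$. *)

theory Defs
  imports "HOL-Analysis.Analysis" "HOL-Computational_Algebra.Primes" "HOL-Number_Theory.Cong"
begin

text \<open>A 2x2 integer matrix (a,b,c,d) stands for the matrix with rows (a b) and (c d).
  The extended rationals Q u {oo} are modelled as rat option, None being oo.\<close>

type_synonym mat2 = "int \<times> int \<times> int \<times> int"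

definition SL2Z :: "mat2 set" where
  "SL2Z = {(a,b,c,d). a*d - b*c = 1}"

definition Gamma_n :: "nat \<Rightarrow> mat2 set" where
  "Gamma_n n = {(a,b,c,d) \<in> SL2Z. (int n)^2 dvd c \<and>
      ([a = 1] (mod int n) \<and> [d = 1] (mod int n) \<or>
       [a = -1] (mod int n) \<and> [d = -1] (mod int n))}"

fun moebius :: "mat2 \<Rightarrow> rat option \<Rightarrow> rat option" where
  "moebius (a,b,c,d) None = (if c = 0 then None else Some (of_int a / of_int c))"
| "moebius (a,b,c,d) (Some x) =
     (if of_int c * x + of_int d = 0 then None
      else Some ((of_int a * x + of_int b) / (of_int c * x + of_int d)))"

definition orbit :: "mat2 set \<Rightarrow> rat option \<Rightarrow> rat option set" where
  "orbit G x = (\<lambda>g. moebius g x) ` G"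

definition cusps :: "mat2 set \<Rightarrow> rat option set set" where
  "cusps G = range (orbit G)"

end

theory Submission
  imports Defs
begin


definition act :: "mat2 \<Rightarrow> int \<times> int \<Rightarrow> int \<times> int" where
  "act g v = (case g of (a,b,c,d) \<Rightarrow> case v of (p,q) \<Rightarrow> (a*p+b*q, c*p+d*q))"

definition mmul :: "mat2 \<Rightarrow> mat2 \<Rightarrow> mat2" where
  "mmul g h = (case g of (a,b,c,d) \<Rightarrow> case h of (a',b',c',d') \<Rightarrow>
     (a*a'+b*c', a*b'+b*d', c*a'+d*c', c*b'+d*d'))"

definition pt :: "int \<times> int \<Rightarrow> rat option" where
  "pt v = (case v of (p,q) \<Rightarrow> if q = 0 then None else Some (of_int p / of_int q))"

fun rep :: "rat option \<Rightarrow> int \<times> int" where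
  "rep None = (1,0)"
| "rep (Some r) = quotient_of r"

lemma act_mmul: "act (mmul g h) v = act g (act h v)"
  by (cases g; cases h; cases v) (simp add: act_def mmul_def algebra_simps)

lemma moebius_pt:
  assumes "a*d - b*c = 1" "coprime p q"
  shows "moebius (a,b,c,d) (pt (p,q)) = pt (act (a,b,c,d) (p,q))"
proof (cases "q = 0")
  case True
  then have "p \<noteq> 0" using assms(2) by auto
  then show ?thesis using True by (auto simp: pt_def act_def)
next
  case False
  have e: "(of_int c * (of_int p / of_int q) + of_int d = (0::rat)) \<longleftrightarrow> c*p+d*q = 0"
  proof -
    have "of_int c * (of_int p / of_int q) + of_int d = (of_int (c*p+d*q) / of_int q :: rat)"
      using False by (simp add: field_simps)
    then show ?thesis using False by (metis divide_eq_0_iff of_int_eq_0_iff)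
  qed
  show ?thesis
  proof (cases "c*p+d*q = 0")
    case True then show ?thesis using False e by (simp add: pt_def act_def)
  next
    case F2: False
    have n1: "of_int a * (of_int p / of_int q) + of_int b = (of_int (a*p+b*q) / of_int q :: rat)"
      using False by (simp add: field_simps)
    have n2: "of_int c * (of_int p / of_int q) + of_int d = (of_int (c*p+d*q) / of_int q :: rat)"
      using False by (simp add: field_simps)
    have "(of_int a * (of_int p / of_int q) + of_int b) / (of_int c * (of_int p / of_int q) + of_int d)
        = (of_int (a*p+b*q) / of_int (c*p+d*q) :: rat)"
      unfolding n1 n2 using False F2 by simp
    then show ?thesis using False F2 e by (simp add: pt_def act_def)
  qed
qed

lemma pt_rep: "pt (rep x) = x"
proof (cases x)
  case None then show ?thesis by (simp add: pt_def)
next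
  case (Some r)
  obtain p q where pq: "quotient_of r = (p,q)" by (cases "quotient_of r")
  then have "q > 0" "r = of_int p / of_int q" using quotient_of_denom_pos quotient_of_div by auto
  then show ?thesis using Some pq by (simp add: pt_def)
qed

lemma coprime_rep: "coprime (fst (rep x)) (snd (rep x))"
  by (cases x) (auto intro: quotient_of_coprime simp: prod.collapse)

lemma coprime_act:
  fixes a b c d p q :: int
  assumes "a*d - b*c = 1" "coprime p q"
  shows "coprime (a*p+b*q) (c*p+d*q)"
proof (rule coprimeI)
  fix k assume k: "k dvd a*p+b*q" "k dvd c*p+d*q"
  have "d*(a*p+b*q) - b*(c*p+d*q) = (a*d-b*c)*p" by (simp add: algebra_simps)
  then have "p = d*(a*p+b*q) - b*(c*p+d*q)" using assms(1) by simp
  moreover have "k dvd d*(a*p+b*q) - b*(c*p+d*q)" using k by simp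
  ultimately have "k dvd p" by simp
  have "a*(c*p+d*q) - c*(a*p+b*q) = (a*d-b*c)*q" by (simp add: algebra_simps)
  then have "q = a*(c*p+d*q) - c*(a*p+b*q)" using assms(1) by simp
  moreover have "k dvd a*(c*p+d*q) - c*(a*p+b*q)" using k by simp
  ultimately have "k dvd q" by simp
  show "is_unit k" using \<open>k dvd p\<close> \<open>k dvd q\<close> assms(2) coprime_common_divisor by blast
qed

lemma pt_eq:
  assumes "coprime p q" "coprime p' q'" "pt (p,q) = pt (p',q')"
  shows "(p',q') = (p,q) \<or> (p',q') = (-p,-q)"
proof (cases "q = 0")
  case True
  then have "q' = 0" using assms(3) by (auto simp: pt_def split: if_splits)
  then show ?thesis using True assms(1,2) by auto
next
  case False
  then have "q' \<noteq> 0" using assms(3) by (auto simp: pt_def split: if_splits)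
  then have "(of_int p / of_int q :: rat) = of_int p' / of_int q'" using False assms(3) by (simp add: pt_def)
  then have e: "p * q' = p' * q" using False \<open>q' \<noteq> 0\<close>
    by (simp add: field_simps) (metis of_int_eq_iff of_int_mult)
  have "q dvd q'"
  proof -
    have "q dvd p * q'" using e by simp
    then show ?thesis using assms(1) by (metis coprime_commute coprime_dvd_mult_right_iff)
  qed
  moreover have "q' dvd q"
  proof -
    have "q' dvd p' * q" using e by (metis dvd_triv_right)
    then show ?thesis using assms(2) by (metis coprime_commute coprime_dvd_mult_right_iff)
  qed
  ultimately have "q' = q \<or> q' = -q" using zdvd_antisym_abs[of q q'] abs_eq_iff by metis
  then show ?thesis
  proof
    assume "q' = q" then show ?thesis using e False by simp
  next
    assume h: "q' = -q"
    then have "(-p) * q = p' * q" using e by simp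
    then have "p' = -p" using False by (metis mult_cancel_right)
    then show ?thesis using h by simp
  qed
qed



definition GG :: "nat \<Rightarrow> mat2 set" where
  "GG n = {(a,b,c,d) \<in> SL2Z. int n dvd b \<and> int n dvd c \<and>
      ([a = 1] (mod int n) \<and> [d = 1] (mod int n) \<or>
       [a = -1] (mod int n) \<and> [d = -1] (mod int n))}"

definition rr :: "nat \<Rightarrow> int \<times> int \<Rightarrow> int \<times> int" where
  "rr n v = (fst v mod int n, snd v mod int n)"

definition cls :: "nat \<Rightarrow> int \<times> int \<Rightarrow> (int \<times> int) set" where
  "cls n v = {rr n v, rr n (- fst v, - snd v)}"

definition kappa :: "nat \<Rightarrow> rat option \<Rightarrow> (int \<times> int) set" where
  "kappa n x = cls n (rep x)"

lemma cong_lin: "[a = a'] (mod m) \<Longrightarrow> [b = b'] (mod m) \<Longrightarrow> [a*p+b*q = a'*p+b'*q] (mod (m::int))"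
  by (intro cong_add cong_mult cong_refl)

lemma cong_lin2: "[p = p'] (mod m) \<Longrightarrow> [q = q'] (mod m) \<Longrightarrow> [a*p+b*q = a*p'+b*q'] (mod (m::int))"
  by (intro cong_add cong_mult cong_refl)

lemma dvd_cong0: "m dvd b \<Longrightarrow> [b = 0] (mod (m::int))"
  by (simp add: cong_def)

lemma cls_neg: "cls n (-p, -q) = cls n (p, q)"
  by (auto simp: cls_def)

lemma cls_act:
  assumes "g \<in> GG n"
  shows "cls n (act g (p,q)) = cls n (p,q)"
proof -
  obtain a b c d where g: "g = (a,b,c,d)" by (cases g) auto
  have b0: "[b = 0] (mod int n)" and c0: "[c = 0] (mod int n)"
    using assms g by (auto simp: GG_def dvd_cong0)
  consider "[a = 1] (mod int n)" "[d = 1] (mod int n)" | "[a = -1] (mod int n)" "[d = -1] (mod int n)"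
    using assms g by (auto simp: GG_def)
  then show ?thesis
  proof cases
    case 1
    have e1: "[a*p+b*q = 1*p+0*q] (mod int n)" using 1 b0 by (intro cong_lin)
    have e2: "[c*p+d*q = 0*p+1*q] (mod int n)" using 1 c0 by (intro cong_lin)
    have r1: "rr n (act g (p,q)) = rr n (p,q)" using e1 e2 g by (simp add: rr_def act_def cong_def)
    have e3: "[- (a*p+b*q) = - p] (mod int n)" using e1 by (subst cong_minus_minus_iff) simp
    have e4: "[- (c*p+d*q) = - q] (mod int n)" using e2 by (subst cong_minus_minus_iff) simp
    have "rr n (- fst (act g (p,q)), - snd (act g (p,q))) = rr n (-p,-q)"
      using e3 e4 g by (simp add: rr_def act_def cong_def)
    with r1 show ?thesis by (simp add: cls_def)
  next
    case 2
    have e1: "[a*p+b*q = (-1)*p+0*q] (mod int n)" using 2 b0 by (intro cong_lin)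
    have e2: "[c*p+d*q = 0*p+(-1)*q] (mod int n)" using 2 c0 by (intro cong_lin)
    have r1: "rr n (act g (p,q)) = rr n (-p,-q)" using e1 e2 g by (simp add: rr_def act_def cong_def)
    have e1': "[a*p+b*q = -p] (mod int n)" using e1 by simp
    have e2': "[c*p+d*q = -q] (mod int n)" using e2 by simp
    have e3: "[- (a*p+b*q) = - (- p)] (mod int n)" using e1' by (simp only: cong_minus_minus_iff)
    have e4: "[- (c*p+d*q) = - (- q)] (mod int n)" using e2' by (simp only: cong_minus_minus_iff)
    have "rr n (- fst (act g (p,q)), - snd (act g (p,q))) = rr n (p,q)"
      using e3 e4 g by (simp add: rr_def act_def cong_def)
    with r1 show ?thesis by (auto simp: cls_def)
  qed
qed

lemma conj_decomp:
  "mmul (p,s,q,t) (mmul (1+m*x1, m*x2, m*x3, 1+m*x4) (t,-s,-q,p)) =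
   (let e = mmul (p,s,q,t) (mmul (x1,x2,x3,x4) (t,-s,-q,p)) in
     (p*t-s*q + m * fst e, m * fst (snd e), m * fst (snd (snd e)), p*t-s*q + m * snd (snd (snd e))))"
  by (simp add: mmul_def Let_def algebra_simps)



lemma core:
  assumes cp: "coprime p q" and cp': "coprime p' q'"
    and r: "rr n (p,q) = rr n (p',q')"
  shows "\<exists>a b c d. (a,b,c,d) \<in> GG n \<and> [a = 1] (mod int n) \<and> [d = 1] (mod int n)
           \<and> act (a,b,c,d) (p,q) = (p',q')"
proof -
  define m where "m = int n"
  have pp: "[p = p'] (mod m)" and qq: "[q = q'] (mod m)" using r by (auto simp: rr_def cong_def m_def)
  obtain u0 v0 where "u0*p + v0*q = gcd p q" using bezout_int by blast
  then have uv: "u0*p + v0*q = 1" using cp by simp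
  define t where "t = u0"
  define s where "s = -v0"
  have dets: "p*t - s*q = 1" using uv by (simp add: t_def s_def algebra_simps)
  define u1 where "u1 = t*p' + (-s)*q'"
  define u2 where "u2 = (-q)*p' + p*q'"
  have c1: "[t*p + (-s)*q = u1] (mod m)" unfolding u1_def using pp qq by (intro cong_lin2)
  have c2: "[(-q)*p + p*q = u2] (mod m)" unfolding u2_def using pp qq by (intro cong_lin2)
  have "t*p + (-s)*q = 1" using dets by (simp add: algebra_simps)
  then have "[u1 = 1] (mod m)" using c1 by (simp add: cong_sym)
  then obtain k where k: "1 - u1 = m*k" by (metis cong_iff_dvd_diff cong_sym dvdE)
  have "[u2 = 0] (mod m)" using c2 by (simp add: cong_sym)
  then obtain y where y: "u2 = m*y" by (metis cong_0_iff dvdE)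
  have cpu: "coprime u1 u2" unfolding u1_def u2_def
    using coprime_act[of t p "-s" "-q" p' q'] dets cp' by (simp add: algebra_simps)
  obtain al be where "al*u1 + be*u2 = gcd u1 u2" using bezout_int by blast
  then have ab: "al*u1 + be*u2 = 1" using cpu by simp
  define x1 where "x1 = -k"
  define x2 where "x2 = -k*be"
  define x3 where "x3 = y"
  define x4 where "x4 = k*al"
  have gam: "(u1, m*x2, u2, 1 + m*x4) = (1 + m*x1, m*x2, m*x3, 1 + m*x4)"
    using k y by (simp add: x1_def x3_def algebra_simps)
  have detg: "u1 * (1 + m*x4) - (m*x2) * u2 = 1"
  proof -
    have "u1 * (1 + m*x4) - (m*x2) * u2 = u1 + m*k*(al*u1 + be*u2)"
      by (simp add: x2_def x4_def algebra_simps)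
    also have "\<dots> = 1" using ab k by (simp add: algebra_simps)
    finally show ?thesis .
  qed
  define g where "g = mmul (p,s,q,t) (mmul (u1, m*x2, u2, 1 + m*x4) (t,-s,-q,p))"
  define e where "e = mmul (p,s,q,t) (mmul (x1,x2,x3,x4) (t,-s,-q,p))"
  have gform: "g = (1 + m * fst e, m * fst (snd e), m * fst (snd (snd e)), 1 + m * snd (snd (snd e)))"
    unfolding g_def gam conj_decomp e_def[symmetric] using dets by (simp add: Let_def)
  have detm: "\<And>a b c d a' b' c' d'. fst (mmul (a,b,c,d) (a',b',c',d')) * snd (snd (snd (mmul (a,b,c,d) (a',b',c',d'))))
     - fst (snd (mmul (a,b,c,d) (a',b',c',d'))) * fst (snd (snd (mmul (a,b,c,d) (a',b',c',d'))))
     = (a*d-b*c)*(a'*d'-b'*c')"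
    by (simp add: mmul_def algebra_simps)
  obtain A B C D where ABCD: "mmul (u1, m*x2, u2, 1 + m*x4) (t,-s,-q,p) = (A,B,C,D)" by (cases "mmul (u1, m*x2, u2, 1 + m*x4) (t,-s,-q,p)") auto
  have dsi: "t*p - (-s)*(-q) = 1" using dets by (simp add: mult.commute)
  have "A*D - B*C = (u1 * (1 + m*x4) - (m*x2) * u2) * (t*p - (-s)*(-q))"
    using detm[of u1 "m*x2" u2 "1 + m*x4" t "-s" "-q" p] ABCD by simp
  then have "A*D - B*C = 1" using detg dsi by simp
  then have "fst g * snd (snd (snd g)) - fst (snd g) * fst (snd (snd g)) = 1"
    using detm[of p s q t A B C D] dets unfolding g_def ABCD by simp
  then have inSL: "g \<in> SL2Z" using gform by (simp add: SL2Z_def)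
  have actg: "act g (p,q) = (p',q')"
  proof -
    have "act (t,-s,-q,p) (p,q) = (1,0)" using dets by (simp add: act_def algebra_simps)
    moreover have "act (u1, m*x2, u2, 1 + m*x4) (1,0) = (u1,u2)" by (simp add: act_def)
    moreover have "act (p,s,q,t) (u1,u2) = (p',q')"
    proof -
      have "act (p,s,q,t) (u1,u2) = ((p*t-s*q)*p', (p*t-s*q)*q')"
        by (simp add: act_def u1_def u2_def algebra_simps)
      then show ?thesis using dets by simp
    qed
    ultimately show ?thesis unfolding g_def act_mmul by simp
  qed
  obtain g1 g2 g3 g4 where g4: "g = (g1,g2,g3,g4)" by (cases g) auto
  obtain E1 E2 E3 E4 where e4: "e = (E1,E2,E3,E4)" by (cases e) auto
  have gg: "g1 = 1 + m*E1" "g2 = m*E2" "g3 = m*E3" "g4 = 1 + m*E4" using gform g4 e4 by simp_all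
  have "[g1 = 1] (mod int n)" unfolding gg m_def cong_iff_dvd_diff by simp
  moreover have "[g4 = 1] (mod int n)" unfolding gg m_def cong_iff_dvd_diff by simp
  moreover have "int n dvd g2" "int n dvd g3" unfolding gg m_def by simp_all
  moreover have "(g1,g2,g3,g4) \<in> SL2Z" using inSL g4 by simp
  ultimately have "(g1,g2,g3,g4) \<in> GG n" by (simp add: GG_def)
  then show ?thesis using \<open>[g1 = 1] (mod int n)\<close> \<open>[g4 = 1] (mod int n)\<close> actg g4 by blast
qed

lemma cls_core:
  assumes cp: "coprime p q" and cp': "coprime p' q'"
    and r: "cls n (p,q) = cls n (p',q')"
  shows "\<exists>g\<in>GG n. act g (p,q) = (p',q')"
proof -
  have "rr n (p',q') \<in> cls n (p,q)" using r by (simp add: cls_def)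
  then consider "rr n (p',q') = rr n (p,q)" | "rr n (p',q') = rr n (-p,-q)" by (auto simp: cls_def)
  then show ?thesis
  proof cases
    case 1
    then show ?thesis using core[OF cp cp' 1[symmetric]] by fastforce
  next
    case 2
    have cpm: "coprime (-p) (-q)" using cp by simp
    obtain a b c d where h: "(a,b,c,d) \<in> GG n" "[a = 1] (mod int n)" "[d = 1] (mod int n)"
      "act (a,b,c,d) (-p,-q) = (p',q')"
      using core[OF cpm cp'] 2 by metis
    have "(-a,-b,-c,-d) \<in> GG n" using h(1-3)
      by (auto simp: GG_def SL2Z_def cong_minus_minus_iff)
    moreover have "act (-a,-b,-c,-d) (p,q) = (p',q')" using h(4) by (simp add: act_def)
    ultimately show ?thesis by blast
  qed
qed

lemma orbit_char: "y \<in> orbit (GG n) x \<longleftrightarrow> kappa n y = kappa n x"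
proof
  assume "y \<in> orbit (GG n) x"
  then obtain g where g: "g \<in> GG n" "y = moebius g x" by (auto simp: orbit_def)
  obtain a b c d where gd: "g = (a,b,c,d)" by (cases g) auto
  obtain p q where v: "rep x = (p,q)" by (cases "rep x") auto
  have cp: "coprime p q" using coprime_rep[of x] v by simp
  have det: "a*d - b*c = 1" using g gd by (simp add: GG_def SL2Z_def)
  have "y = pt (act g (p,q))" using g(2) moebius_pt[OF det cp] pt_rep[of x] v gd by metis
  obtain p' q' where w: "rep y = (p',q')" by (cases "rep y") auto
  obtain P Q where PQ: "act g (p,q) = (P,Q)" by (cases "act g (p,q)") auto
  have cpw: "coprime P Q" using coprime_act[OF det cp] PQ gd by (simp add: act_def)
  have "pt (P,Q) = pt (p',q')" using \<open>y = pt (act g (p,q))\<close> PQ pt_rep[of y] w by simp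
  then have "(p',q') = (P,Q) \<or> (p',q') = (-P,-Q)" using pt_eq cpw coprime_rep[of y] w by simp
  then have "cls n (p',q') = cls n (P,Q)" using cls_neg by auto
  also have "\<dots> = cls n (p,q)" using cls_act[OF g(1)] PQ by metis
  finally show "kappa n y = kappa n x" using v w by (simp add: kappa_def)
next
  assume "kappa n y = kappa n x"
  obtain p q where v: "rep x = (p,q)" by (cases "rep x") auto
  obtain p' q' where w: "rep y = (p',q')" by (cases "rep y") auto
  have cp: "coprime p q" using coprime_rep[of x] v by simp
  have cp': "coprime p' q'" using coprime_rep[of y] w by simp
  obtain g where g: "g \<in> GG n" "act g (p,q) = (p',q')"
    using cls_core[OF cp cp'] \<open>kappa n y = kappa n x\<close> v w by (metis kappa_def)
  obtain a b c d where gd: "g = (a,b,c,d)" by (cases g) auto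
  have det: "a*d - b*c = 1" using g gd by (simp add: GG_def SL2Z_def)
  have "moebius g x = y" using moebius_pt[OF det cp] pt_rep[of x] pt_rep[of y] v w g(2) gd by metis
  then show "y \<in> orbit (GG n) x" using g(1) by (auto simp: orbit_def)
qed



definition AA :: "nat \<Rightarrow> nat set \<Rightarrow> (int \<times> int) set" where
  "AA n S = {(u,v). 0 \<le> u \<and> u < int n \<and> 0 \<le> v \<and> v < int n \<and>
      (\<forall>l\<in>S. \<not> (int l dvd u \<and> int l dvd v))}"

lemma prime_int_dvd_mult_other:
  assumes "prime (l::nat)" "prime (p::nat)" "l \<noteq> p"
  shows "int l dvd int p * x \<longleftrightarrow> int l dvd x"
proof -
  have pl: "prime (int l)" using assms(1) by simp
  have "\<not> int l dvd int p"
    using assms primes_dvd_imp_eq by (metis int_dvd_int_iff)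
  then show ?thesis using prime_dvd_mult_iff[OF pl] by auto
qed

lemma AA_empty: "AA n {} = {0..<int n} \<times> {0..<int n}"
  by (auto simp: AA_def)

lemma sieve:
  assumes "finite S"
  shows "(\<forall>l\<in>S. prime l \<and> l dvd n) \<Longrightarrow> n > 0 \<Longrightarrow>
    real (card (AA n S)) = real n ^ 2 * (\<Prod>l\<in>S. (1 - 1 / real l ^ 2))"
  using assms
proof (induction S arbitrary: n rule: finite_induct)
  case empty
  then show ?case by (simp add: AA_empty power2_eq_square)
next
  case (insert p S)
  have pp: "prime p" "p dvd n" using insert.prems by auto
  obtain n' where nn: "n = p * n'" using pp(2) by (auto elim: dvdE)
  have n'pos: "n' > 0" using insert.prems nn by (cases n') auto
  have p0: "p > 0" using pp prime_gt_0_nat by blast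
  have Sn': "\<forall>l\<in>S. prime l \<and> l dvd n'"
  proof
    fix l assume l: "l \<in> S"
    then have "prime l" "l dvd p * n'" using insert.prems nn by auto
    moreover have "l \<noteq> p" using l insert.hyps by auto
    ultimately have "\<not> l dvd p" using pp(1) primes_dvd_imp_eq by blast
    then show "prime l \<and> l dvd n'"
      using prime_dvd_mult_iff[of l p n'] \<open>prime l\<close> \<open>l dvd p * n'\<close> by blast
  qed
  have Sn: "\<forall>l\<in>S. prime l \<and> l dvd n" using insert.prems by auto
  define f where "f = (\<lambda>(u::int,v::int). (int p * u, int p * v))"
  define B where "B = {x \<in> AA n S. int p dvd fst x \<and> int p dvd snd x}"
  have split: "AA n (insert p S) = AA n S - B" by (auto simp: AA_def B_def)
  have fin: "finite (AA n S)"
    by (rule finite_subset[of _ "{0..<int n} \<times> {0..<int n}"]) (auto simp: AA_def)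
  have BA: "B \<subseteq> AA n S" by (auto simp: B_def)
  have Bimg: "B = f ` AA n' S"
  proof
    show "B \<subseteq> f ` AA n' S"
    proof
      fix x assume x: "x \<in> B"
      obtain u v where uv: "x = (u,v)" by (cases x)
      obtain u' where u': "u = int p * u'" using x uv by (auto simp: B_def elim: dvdE)
      obtain v' where v': "v = int p * v'" using x uv by (auto simp: B_def elim: dvdE)
      have "(u',v') \<in> AA n' S"
      proof -
        have b: "0 \<le> int p * u'" "int p * u' < int p * int n'" "0 \<le> int p * v'" "int p * v' < int p * int n'"
          using x uv u' v' nn by (auto simp: B_def AA_def)
        have "0 \<le> u'" using b(1) p0 by (simp add: zero_le_mult_iff)
        moreover have "u' < int n'" using b(2) p0 by simp
        moreover have "0 \<le> v'" using b(3) p0 by (simp add: zero_le_mult_iff)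
        moreover have "v' < int n'" using b(4) p0 by simp
        moreover have "\<forall>l\<in>S. \<not> (int l dvd u' \<and> int l dvd v')"
          using x uv u' v' by (auto simp: B_def AA_def)
        ultimately show ?thesis by (simp add: AA_def)
      qed
      then show "x \<in> f ` AA n' S" using uv u' v' by (auto simp: f_def)
    qed
  next
    show "f ` AA n' S \<subseteq> B"
    proof
      fix x assume "x \<in> f ` AA n' S"
      then obtain u' v' where uv: "(u',v') \<in> AA n' S" "x = (int p * u', int p * v')" by (auto simp: f_def)
      have "int p * u' < int p * int n'" "int p * v' < int p * int n'" using uv p0 by (auto simp: AA_def)
      moreover have "\<forall>l\<in>S. \<not> (int l dvd int p * u' \<and> int l dvd int p * v')"
      proof
        fix l assume l: "l \<in> S"
        have "l \<noteq> p" using l insert.hyps by auto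
        then show "\<not> (int l dvd int p * u' \<and> int l dvd int p * v')"
          using prime_int_dvd_mult_other[of l p] Sn l pp uv(1) by (auto simp: AA_def)
      qed
      ultimately show "x \<in> B" using uv nn p0 by (auto simp: B_def AA_def)
    qed
  qed
  have injf: "inj f" unfolding f_def inj_def using p0 by auto
  have cB: "card B = card (AA n' S)" unfolding Bimg using injf by (simp add: card_image inj_on_subset)
  have "card (AA n (insert p S)) = card (AA n S) - card B"
    unfolding split using fin BA by (simp add: card_Diff_subset finite_subset)
  moreover have "card B \<le> card (AA n S)" using fin BA card_mono by blast
  ultimately have "real (card (AA n (insert p S))) = real (card (AA n S)) - real (card (AA n' S))"
    using cB by simp
  also have "\<dots> = real n ^ 2 * (\<Prod>l\<in>S. (1 - 1 / real l ^ 2)) - real n' ^ 2 * (\<Prod>l\<in>S. (1 - 1 / real l ^ 2))"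
    using insert.IH[OF Sn] insert.IH[OF Sn' n'pos] insert.prems by simp
  also have "\<dots> = real n ^ 2 * ((1 - 1 / real p ^ 2) * (\<Prod>l\<in>S. (1 - 1 / real l ^ 2)))"
    using nn p0 by (simp add: field_simps power2_eq_square)
  also have "\<dots> = real n ^ 2 * (\<Prod>l\<in>insert p S. (1 - 1 / real l ^ 2))"
    using insert.hyps by simp
  finally show ?case .
qed



definition negr :: "nat \<Rightarrow> int \<times> int \<Rightarrow> int \<times> int" where
  "negr n t = ((- fst t) mod int n, (- snd t) mod int n)"

definition PP :: "nat \<Rightarrow> nat set" where "PP n = {p. prime p \<and> p dvd n}"
definition TT :: "nat \<Rightarrow> (int \<times> int) set" where "TT n = AA n (PP n)"
definition QQ :: "nat \<Rightarrow> (int \<times> int) set set" where "QQ n = (\<lambda>t. {t, negr n t}) ` TT n"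

lemma cls_rr: "cls n v = {rr n v, negr n (rr n v)}"
  by (simp add: cls_def rr_def negr_def mod_minus_eq)

lemma coprime_by_primes:
  fixes a b :: int
  assumes "\<And>l::nat. prime l \<Longrightarrow> \<not> (int l dvd a \<and> int l dvd b)"
  shows "coprime a b"
proof (rule ccontr)
  assume "\<not> coprime a b"
  then have "gcd a b \<noteq> 1" by (simp add: coprime_iff_gcd_eq_1)
  then have "nat (gcd a b) \<noteq> 1" by (metis gcd_ge_0_int nat_1 nat_eq_iff2 zero_less_one_class.zero_le_one nat_one_as_int)
  then obtain l where l: "prime l" "l dvd nat (gcd a b)" using prime_factor_nat by blast
  then have "int l dvd gcd a b" by (metis gcd_ge_0_int int_dvd_int_iff int_nat_eq)
  then have "int l dvd a" "int l dvd b" by auto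
  then show False using assms l(1) by blast
qed

lemma TT_iff: "(u,v) \<in> TT n \<longleftrightarrow> 0 \<le> u \<and> u < int n \<and> 0 \<le> v \<and> v < int n \<and>
      (\<forall>l. prime l \<longrightarrow> l dvd n \<longrightarrow> \<not> (int l dvd u \<and> int l dvd v))"
  by (auto simp: TT_def AA_def PP_def)

lemma rr_in_TT:
  assumes "n > 0" "coprime p q"
  shows "rr n (p,q) \<in> TT n"
proof -
  have "\<not> (int l dvd p mod int n \<and> int l dvd q mod int n)" if l: "prime l" "l dvd n" for l
  proof
    assume h: "int l dvd p mod int n \<and> int l dvd q mod int n"
    have ln: "int l dvd int n" using l by simp
    then have "int l dvd p" "int l dvd q" using h dvd_mod_iff[OF ln] by auto
    then have "is_unit (int l)" using assms(2) coprime_common_divisor by blast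
    then show False using l(1) by simp
  qed
  then show ?thesis using assms(1) by (simp add: rr_def TT_iff)
qed

lemma lift:
  assumes "n > 0" "(u,v) \<in> TT n"
  shows "\<exists>p q. coprime p q \<and> rr n (p,q) = (u,v)"
proof -
  define m where "m = int n"
  have T: "0 \<le> u" "u < m" "0 \<le> v" "v < m" "\<And>l. prime l \<Longrightarrow> l dvd n \<Longrightarrow> \<not> (int l dvd u \<and> int l dvd v)"
    using assms(2) by (auto simp: TT_iff m_def)
  define v0 where "v0 = v + m"
  have v0pos: "v0 > 0" using T assms(1) by (simp add: v0_def m_def)
  define L where "L = {l::nat. prime l \<and> int l dvd v0 \<and> \<not> int l dvd u}"
  have finL: "finite L"
  proof (rule finite_subset[of _ "{..nat v0}"])
    show "L \<subseteq> {..nat v0}"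
    proof
      fix l assume "l \<in> L"
      then have "int l dvd v0" by (simp add: L_def)
      then have "int l \<le> v0" using v0pos zdvd_imp_le by blast
      then show "l \<in> {..nat v0}" by simp
    qed
  qed simp
  define t where "t = int (\<Prod>L)"
  define P where "P = u + m * t"
  have cop: "coprime P v0"
  proof (rule coprime_by_primes)
    fix l :: nat assume l: "prime l"
    have pl: "prime (int l)" using l by simp
    show "\<not> (int l dvd P \<and> int l dvd v0)"
    proof
      assume h: "int l dvd P \<and> int l dvd v0"
      show False
      proof (cases "int l dvd u")
        case True
        then have "l \<notin> L" by (simp add: L_def)
        have nt: "\<not> int l dvd t"
        proof
          assume "int l dvd t"
          then have "l dvd \<Prod>L" unfolding t_def by (metis int_dvd_int_iff)
          then obtain l' where "l' \<in> L" "l dvd l'" using prime_dvd_prod_iff[OF finL l] by auto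
          then have "l = l'" using l primes_dvd_imp_eq by (auto simp: L_def)
          then show False using \<open>l \<notin> L\<close> \<open>l' \<in> L\<close> by simp
        qed
        have nm: "\<not> int l dvd m"
        proof
          assume "int l dvd m"
          then have "l dvd n" by (simp add: m_def)
          moreover have "int l dvd v" using \<open>int l dvd m\<close> h by (metis v0_def add_diff_cancel_right' dvd_diff)
          ultimately show False using T(5)[OF l] True by blast
        qed
        have "\<not> int l dvd m * t" using nm nt prime_dvd_mult_iff[OF pl] by blast
        moreover have "int l dvd m * t" using h True by (metis P_def add_diff_cancel_left' dvd_diff)
        ultimately show False by blast
      next
        case False
        then have "l \<in> L" using h l by (simp add: L_def)
        then have "l dvd \<Prod>L" using finL dvd_prodI[of L l "\<lambda>x. x"] by simp
        then have "int l dvd t" unfolding t_def by (metis int_dvd_int_iff)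
        then have "int l dvd m * t" by simp
        then have "int l dvd u" using h by (metis P_def add_diff_cancel_right' dvd_diff)
        then show False using False by blast
      qed
    qed
  qed
  have "rr n (P, v0) = (u,v)"
    using T by (simp add: rr_def P_def v0_def m_def)
  then show ?thesis using cop by blast
qed

lemma range_kappa:
  assumes "n > 0"
  shows "range (kappa n) = QQ n"
proof
  show "range (kappa n) \<subseteq> QQ n"
  proof
    fix k assume "k \<in> range (kappa n)"
    then obtain x where x: "k = kappa n x" by auto
    obtain p q where v: "rep x = (p,q)" by (cases "rep x") auto
    have "coprime p q" using coprime_rep[of x] v by simp
    then have "rr n (p,q) \<in> TT n" using rr_in_TT assms by blast
    then show "k \<in> QQ n" using x v by (auto simp: kappa_def cls_rr QQ_def)
  qed
next
  show "QQ n \<subseteq> range (kappa n)"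
  proof
    fix k assume "k \<in> QQ n"
    then obtain t where t: "t \<in> TT n" "k = {t, negr n t}" by (auto simp: QQ_def)
    obtain u v where uv: "t = (u,v)" by (cases t)
    obtain p q where pq: "coprime p q" "rr n (p,q) = t" using lift[OF assms] t(1) uv by blast
    define x where "x = pt (p,q)"
    obtain p' q' where w: "rep x = (p',q')" by (cases "rep x") auto
    have "coprime p' q'" using coprime_rep[of x] w by simp
    moreover have "pt (p',q') = pt (p,q)" using pt_rep[of x] w x_def by simp
    ultimately have "(p',q') = (p,q) \<or> (p',q') = (-p,-q)" using pt_eq[OF pq(1)] by metis
    then have "cls n (p',q') = cls n (p,q)" using cls_neg by auto
    then have "kappa n x = k" using w t pq by (simp add: kappa_def cls_rr)
    then show "k \<in> range (kappa n)" by blast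
  qed
qed



lemma negr_TT: assumes "t \<in> TT n" shows "negr n t \<in> TT n"
proof -
  obtain u v where t: "t = (u,v)" by (cases t)
  have np: "n > 0" using assms t by (auto simp: TT_iff)
  have "\<not> (int l dvd (-u) mod int n \<and> int l dvd (-v) mod int n)" if l: "prime l" "l dvd n" for l
  proof -
    have ln: "int l dvd int n" using l by simp
    show ?thesis using assms t l dvd_mod_iff[OF ln] by (auto simp: TT_iff)
  qed
  then show ?thesis using np t by (simp add: negr_def TT_iff)
qed

lemma negr_negr: assumes "t \<in> TT n" shows "negr n (negr n t) = t"
proof -
  obtain u v where t: "t = (u,v)" by (cases t)
  have "u mod int n = u" "v mod int n = v" using assms t by (auto simp: TT_iff)
  then show ?thesis using t by (simp add: negr_def mod_minus_eq)
qed

lemma two_dvd_imp: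
  assumes "(-u) mod int n = u" "0 \<le> u" "u < int n"
  shows "int n dvd 2 * u"
proof -
  have "[- u = u] (mod int n)" using assms(1,2,3) by (simp add: cong_def)
  then have "int n dvd u - (-u)" by (simp add: cong_iff_dvd_diff cong_sym_eq)
  then show ?thesis by simp
qed

lemma negr_neq: assumes "t \<in> TT n" "n \<ge> 3" shows "negr n t \<noteq> t"
proof
  assume h: "negr n t = t"
  obtain u v where t: "t = (u,v)" by (cases t)
  have T: "0 \<le> u" "u < int n" "0 \<le> v" "v < int n"
     "\<And>l. prime l \<Longrightarrow> l dvd n \<Longrightarrow> \<not> (int l dvd u \<and> int l dvd v)"
    using assms(1) t by (auto simp: TT_iff)
  have du: "int n dvd 2 * u" using two_dvd_imp[of u n] h t T by (simp add: negr_def)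
  have dv: "int n dvd 2 * v" using two_dvd_imp[of v n] h t T by (simp add: negr_def)
  obtain k where k: "int k dvd u" "int k dvd v" "k dvd n" "k \<noteq> 1"
  proof (cases "even n")
    case True
    then obtain k where nk: "n = 2*k" by (auto elim: evenE)
    have "2 * int k dvd 2 * u" using du nk by simp
    then have a: "int k dvd u" using dvd_times_left_cancel_iff[of "2::int"] by simp
    have "2 * int k dvd 2 * v" using dv nk by simp
    then have b: "int k dvd v" using dvd_times_left_cancel_iff[of "2::int"] by simp
    have "k \<noteq> 1" using nk assms(2) by auto
    then show ?thesis using that a b nk by simp
  next
    case False
    then have cp: "coprime (int n) 2" by (simp add: coprime_commute)
    have a: "int n dvd u" using du cp by (metis coprime_dvd_mult_right_iff mult.commute)
    have b: "int n dvd v" using dv cp by (metis coprime_dvd_mult_right_iff mult.commute)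
    have "n \<noteq> 1" using assms(2) by simp
    then show ?thesis using that a b by simp
  qed
  obtain l where l: "prime l" "l dvd k" using prime_factor_nat k(4) by blast
  have "int l dvd int k" using l(2) by simp
  then have "int l dvd u" "int l dvd v" using k dvd_trans by blast+
  moreover have "l dvd n" using l(2) k(3) dvd_trans by blast
  ultimately show False using T(5) l(1) by blast
qed

lemma card_TT_QQ:
  assumes "n \<ge> 3"
  shows "finite (QQ n) \<and> card (TT n) = 2 * card (QQ n)"
proof -
  have finT: "finite (TT n)"
    by (rule finite_subset[of _ "{0..<int n} \<times> {0..<int n}"]) (auto simp: TT_iff)
  have finQ: "finite (QQ n)" using finT by (simp add: QQ_def)
  have U: "\<Union>(QQ n) = TT n" using negr_TT by (auto simp: QQ_def)
  have c2: "\<forall>c\<in>QQ n. card c = 2" using negr_neq[OF _ assms] by (auto simp: QQ_def card_insert_if) (metis negr_neq[OF _ assms])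
  have disj: "\<forall>c1\<in>QQ n. \<forall>c2\<in>QQ n. c1 \<noteq> c2 \<longrightarrow> c1 \<inter> c2 = {}"
  proof (intro ballI impI)
    fix c1 c2 assume c: "c1 \<in> QQ n" "c2 \<in> QQ n" "c1 \<noteq> c2"
    then obtain s t where st: "s \<in> TT n" "t \<in> TT n" "c1 = {s, negr n s}" "c2 = {t, negr n t}"
      by (auto simp: QQ_def)
    show "c1 \<inter> c2 = {}"
    proof (rule ccontr)
      assume "c1 \<inter> c2 \<noteq> {}"
      then have "s = t \<or> s = negr n t \<or> negr n s = t \<or> negr n s = negr n t" using st by auto
      then have "c1 = c2" using st negr_negr by (metis insert_commute)
      then show False using c(3) by simp
    qed
  qed
  have "2 * card (QQ n) = card (\<Union>(QQ n))"
    by (rule card_partition) (use finQ finT U c2 disj in auto)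
  then show ?thesis using U finQ by simp
qed

lemma cusps_GG:
  assumes "n \<ge> 3"
  shows "finite (cusps (GG n)) \<and> card (cusps (GG n)) = card (QQ n)"
proof -
  have orb: "orbit (GG n) x = {z. kappa n z = kappa n x}" for x
    using orbit_char by auto
  have eq: "cusps (GG n) = (\<lambda>k. {z. kappa n z = k}) ` range (kappa n)"
    unfolding cusps_def using orb by auto
  have inj: "inj_on (\<lambda>k. {z. kappa n z = k}) (range (kappa n))"
  proof (rule inj_onI)
    fix k1 k2 assume "k1 \<in> range (kappa n)" "k2 \<in> range (kappa n)"
      and e: "{z. kappa n z = k1} = {z. kappa n z = k2}"
    then obtain x where "kappa n x = k1" by auto
    then show "k1 = k2" using e by blast
  qed
  have r: "range (kappa n) = QQ n" using range_kappa assms by simp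
  show ?thesis using eq inj r card_image card_TT_QQ[OF assms] by simp
qed



definition phi :: "nat \<Rightarrow> rat option \<Rightarrow> rat option" where
  "phi n = map_option (\<lambda>r. of_nat n * r)"
definition phinv :: "nat \<Rightarrow> rat option \<Rightarrow> rat option" where
  "phinv n = map_option (\<lambda>r. r / of_nat n)"
definition conjm :: "nat \<Rightarrow> mat2 \<Rightarrow> mat2" where
  "conjm n g = (case g of (a,b,c,d) \<Rightarrow> (a, int n * b, c div int n, d))"

lemma phinv_phi: "n > 0 \<Longrightarrow> phinv n (phi n x) = x"
  by (cases x) (auto simp: phi_def phinv_def)
lemma phi_phinv: "n > 0 \<Longrightarrow> phi n (phinv n x) = x"
  by (cases x) (auto simp: phi_def phinv_def)

lemma phi_moebius:
  assumes "n > 0" "int n dvd c"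
  shows "phi n (moebius (a,b,c,d) x) = moebius (a, int n * b, c div int n, d) (phi n x)"
proof -
  obtain c' where c: "c = int n * c'" using assms(2) by (auto elim: dvdE)
  have cd: "c div int n = c'" using c assms(1) by simp
  have nr: "(of_nat n :: rat) \<noteq> 0" using assms(1) by simp
  show ?thesis
  proof (cases x)
    case None
    then show ?thesis using c cd nr assms(1) by (auto simp: phi_def)
  next
    case (Some r)
    have e: "(of_int c * r + of_int d = 0) \<longleftrightarrow> (of_int c' * (of_nat n * r) + of_int d = (0::rat))"
      using c by (simp add: algebra_simps)
    have v: "of_nat n * ((of_int a * r + of_int b) / (of_int c * r + of_int d)) =
       (of_int a * (of_nat n * r) + of_int (int n * b)) / (of_int c' * (of_nat n * r) + of_int d :: rat)"
      using c by (simp add: algebra_simps)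
    show ?thesis using Some e v cd by (simp add: phi_def)
  qed
qed

lemma conjm_image: "n > 0 \<Longrightarrow> conjm n ` Gamma_n n = GG n"
proof
  assume n: "n > 0"
  show "conjm n ` Gamma_n n \<subseteq> GG n"
  proof
    fix h assume "h \<in> conjm n ` Gamma_n n"
    then obtain a b c d where g: "(a,b,c,d) \<in> Gamma_n n" "h = conjm n (a,b,c,d)" by auto
    have "int n * int n dvd c" using g(1) by (simp add: Gamma_n_def power2_eq_square)
    then obtain c' where c: "c = int n * (int n * c')" by (metis dvdE mult.assoc)
    have cd: "c div int n = int n * c'" using c n by simp
    show "h \<in> GG n" using g c cd by (auto simp: Gamma_n_def GG_def SL2Z_def conjm_def algebra_simps)
  qed
next
  assume n: "n > 0"
  show "GG n \<subseteq> conjm n ` Gamma_n n"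
  proof
    fix h assume h: "h \<in> GG n"
    obtain a b c d where hd: "h = (a,b,c,d)" by (cases h) auto
    obtain b' where b: "b = int n * b'" using h hd by (auto simp: GG_def elim: dvdE)
    obtain c' where c: "c = int n * c'" using h hd by (auto simp: GG_def elim: dvdE)
    have "(a, b', int n * c, d) \<in> Gamma_n n"
      using h hd b c by (auto simp: Gamma_n_def GG_def SL2Z_def power2_eq_square algebra_simps)
    moreover have "conjm n (a, b', int n * c, d) = h" using hd b n by (simp add: conjm_def)
    ultimately show "h \<in> conjm n ` Gamma_n n" by force
  qed
qed

lemma orbit_conj:
  assumes "n > 0"
  shows "orbit (Gamma_n n) x = phinv n ` orbit (GG n) (phi n x)"
proof -
  have "orbit (Gamma_n n) x = (\<lambda>g. phinv n (moebius (conjm n g) (phi n x))) ` Gamma_n n"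
    unfolding orbit_def
  proof (rule image_cong[OF refl])
    fix g assume g: "g \<in> Gamma_n n"
    obtain a b c d where gd: "g = (a,b,c,d)" by (cases g) auto
    have "int n dvd c"
    proof -
      have "(int n)^2 dvd c" using g gd by (simp add: Gamma_n_def)
      then show ?thesis by (metis dvd_mult_left power2_eq_square)
    qed
    then show "moebius g x = phinv n (moebius (conjm n g) (phi n x))"
      using phi_moebius[OF assms, of c a b d x] gd phinv_phi[OF assms] by (simp add: conjm_def) metis
  qed
  also have "\<dots> = phinv n ` ((\<lambda>h. moebius h (phi n x)) ` (conjm n ` Gamma_n n))"
    by (simp add: image_image)
  also have "\<dots> = phinv n ` orbit (GG n) (phi n x)"
    using conjm_image[OF assms] by (simp add: orbit_def)
  finally show ?thesis .
qed

lemma cusps_conj: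
  assumes "n > 0"
  shows "cusps (Gamma_n n) = (\<lambda>Ob. phinv n ` Ob) ` cusps (GG n)"
proof -
  have "cusps (Gamma_n n) = (\<lambda>x. phinv n ` orbit (GG n) (phi n x)) ` UNIV"
    unfolding cusps_def using orbit_conj[OF assms] by simp
  also have "\<dots> = (\<lambda>Ob. phinv n ` Ob) ` (orbit (GG n) ` (phi n ` UNIV))"
    by (simp add: image_image)
  also have "phi n ` UNIV = UNIV" using phi_phinv[OF assms] by (metis surjI)
  finally show ?thesis by (simp add: cusps_def)
qed

theorem proposition7p4:
  fixes n :: nat
  assumes "n \<ge> 3"
  shows "finite (cusps (Gamma_n n)) \<and>
    real (card (cusps (Gamma_n n))) =
      (real n)^2 / 2 * (\<Prod>p\<in>{p. prime p \<and> p dvd n}. (1 - 1 / (real p)^2))"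
proof -
  have n: "n > 0" using assms by simp
  have injp: "inj (phinv n)" using phinv_phi[OF n] phi_phinv[OF n] by (metis injI)
  have inj: "inj_on (\<lambda>Ob. phinv n ` Ob) (cusps (GG n))"
    using injp by (simp add: inj_on_def inj_image_eq_iff)
  have G: "finite (cusps (GG n))" "card (cusps (GG n)) = card (QQ n)" using cusps_GG[OF assms] by auto
  have fin: "finite (cusps (Gamma_n n))" using G(1) cusps_conj[OF n] by simp
  have c1: "card (cusps (Gamma_n n)) = card (QQ n)"
    using cusps_conj[OF n] card_image[OF inj] G(2) by simp
  have finP: "finite (PP n)"
    by (rule finite_subset[of _ "{..n}"]) (auto simp: PP_def n dvd_imp_le)
  have "real (card (TT n)) = real n ^ 2 * (\<Prod>l\<in>PP n. (1 - 1 / real l ^ 2))"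
    unfolding TT_def using sieve[OF finP, of n] n by (simp add: PP_def)
  moreover have "card (TT n) = 2 * card (QQ n)" using card_TT_QQ[OF assms] by simp
  ultimately have "real (card (QQ n)) = real n ^ 2 / 2 * (\<Prod>l\<in>PP n. (1 - 1 / real l ^ 2))"
    by simp
  then show ?thesis using fin c1 by (simp add: PP_def)
qed


end
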